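(* Let $v>0$ and let $y^*\in\mathbb{R}^{n^+}$ be defined by $y^*_j=Y$ for $1\le j\le J$ and $y^*_j=\left(\frac{J h^+_j}{S}\right)^{\frac{\alpha}{1-\alpha}}Y$ for $J<j\le n^+$, where $J$ is the transitional index, $S=\sum_{j'=1}^{J}h^+_{j'}$ and $Y=\frac{v S^{\alpha/(1-\alpha)}}{S^{1/(1-\alpha)}+J^{\alpha/(1-\alpha)}\sum_{j'=J+1}^{n^+}(h^+_{j'})^{1/(1-\alpha)}}$. Put $\bar\alpha=1/\alpha$ and define $$\mu_j=-\frac{\bar\alpha}{v}\Big[\sum_{j'=1}^{n^+}(y^*_{j'})^{\bar\alpha}\Big]\Big(\sum_{j'=j}^{n^+}h^+_{j'}\Big)+\bar\alpha\Big[\sum_{j'=j}^{n^+}(y^*_{j'})^{\bar\alpha-1}\Big]\quad(j=1,\dots,n^+),\qquad \Lambda=-\frac{\bar\alpha\sum_{j'=1}^{n^+}(y^*_{j'})^{\bar\alpha}}{v}.$$ Then $(y,\mu,\Lambda)=(y^*,\mu,\Lambda)$ satisfies: $\bar\alpha y_j^{\bar\alpha-1}+\mu_{j+1}-\mu_j+\Lambda h^+_j=0$ for all $j\in\{1,\dots,n^+-1\}$; $\bar\alpha y_{n^+}^{\bar\alpha-1}-\mu_{n^+}+\Lambda h^+_{n^+}=0$; $\mu_{j+1}(y_j-y_{j+1})=0$ for $j\in\{1,\dots,n^+-1\}$ and $\mu_1y_1=0$; $\sum_{j=1}^{n^+}h^+_jy_j=v$; $\mu_j\ge 0$ for all $j$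 and $0\le y_1\le\cdots\le y_{n^+}$.
   Context: Fix $N\in\mathbb{N}$, $\alpha\in(0,1)$ and an integer $1\le n^+\le N$. A function $f:[0,1]\to\mathbb{R}$ is inverse S-shaped if it is strictly increasing, continuously differentiable, and there is $x_0\in[0,1]$ such that $f'$ is strictly decreasing on $[0,x_0]$ and strictly increasing on $[x_0,1]$. Let $W^+:[0,1]\to[0,1]$ be inverse S-shaped with $W^+(0)=0$, $W^+(1)=1$, and $h^+_j:=W^+\!\left(\frac{n^+-j+1}{N}\right)-W^+\!\left(\frac{n^+-j}{N}\right)$ for $j=1,\dots,n^+$. The transitional index is $J:=\min\{j\in\{1,\dots,n^+\}: j\,h^+_{j+1}\ge \sum_{j'=1}^{j}h^+_{j'}\}$ with $h^+_{n^++1}=\infty$. (These conditions are the KKT conditions of minimizing $\sum_j y_j^{1/\alpha}$ subject to $0\le y_1\le\cdots\le y_{n^+}$, $\sum_j h^+_jy_j=v$.) *)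

theory Defs
  imports "HOL-Analysis.Analysis"
begin

definition inverse_S_shaped :: "(real \<Rightarrow> real) \<Rightarrow> bool" where
  "inverse_S_shaped f \<longleftrightarrow>
     strict_mono_on {0..1} f \<and>
     (\<exists>f'. (\<forall>x\<in>{0..1}. (f has_real_derivative f' x) (at x within {0..1})) \<and>
           continuous_on {0..1} f' \<and>
           (\<exists>x0\<in>{0..1}. (\<forall>a\<in>{0..x0}. \<forall>b\<in>{0..x0}. a < b \<longrightarrow> f' b < f' a) \<and>
                         strict_mono_on {x0..1} f'))"

definition hplus :: "(real \<Rightarrow> real) \<Rightarrow> nat \<Rightarrow> nat \<Rightarrow> nat \<Rightarrow> real" where
  "hplus W N np j = W ((real np - real j + 1) / real N) - W ((real np - real j) / real N)"

text \<open>Transitional index; the convention h^+_{np+1} = \<infinity> makes the condition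
automatically true at j = np.\<close>
definition transJ :: "(real \<Rightarrow> real) \<Rightarrow> nat \<Rightarrow> nat \<Rightarrow> nat" where
  "transJ W N np = (LEAST j. 1 \<le> j \<and> j \<le> np \<and>
      (j < np \<longrightarrow> real j * hplus W N np (j+1) \<ge> (\<Sum>j'=1..j. hplus W N np j')))"

definition Ssum :: "(real \<Rightarrow> real) \<Rightarrow> nat \<Rightarrow> nat \<Rightarrow> real" where
  "Ssum W N np = (\<Sum>j'=1..transJ W N np. hplus W N np j')"

definition Yval :: "(real \<Rightarrow> real) \<Rightarrow> nat \<Rightarrow> nat \<Rightarrow> real \<Rightarrow> real \<Rightarrow> real" where
  "Yval W N np \<alpha> v =
     v * Ssum W N np powr (\<alpha> / (1 - \<alpha>)) /
     (Ssum W N np powr (1 / (1 - \<alpha>)) +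
      real (transJ W N np) powr (\<alpha> / (1 - \<alpha>)) *
        (\<Sum>j'=transJ W N np + 1..np. hplus W N np j' powr (1 / (1 - \<alpha>))))"

definition ystar :: "(real \<Rightarrow> real) \<Rightarrow> nat \<Rightarrow> nat \<Rightarrow> real \<Rightarrow> real \<Rightarrow> nat \<Rightarrow> real" where
  "ystar W N np \<alpha> v j =
     (if j \<le> transJ W N np then Yval W N np \<alpha> v
      else (real (transJ W N np) * hplus W N np j / Ssum W N np) powr (\<alpha> / (1 - \<alpha>))
           * Yval W N np \<alpha> v)"

definition mu :: "(real \<Rightarrow> real) \<Rightarrow> nat \<Rightarrow> nat \<Rightarrow> real \<Rightarrow> real \<Rightarrow> nat \<Rightarrow> real" where
  "mu W N np \<alpha> v j =
     - ((1/\<alpha>) / v) * (\<Sum>j'=1..np. ystar W N np \<alpha> v j' powr (1/\<alpha>)) * (\<Sum>j'=j..np. hplus W N np j')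
     + (1/\<alpha>) * (\<Sum>j'=j..np. ystar W N np \<alpha> v j' powr (1/\<alpha> - 1))"

definition Lam :: "(real \<Rightarrow> real) \<Rightarrow> nat \<Rightarrow> nat \<Rightarrow> real \<Rightarrow> real \<Rightarrow> real" where
  "Lam W N np \<alpha> v = - ((1/\<alpha>) * (\<Sum>j'=1..np. ystar W N np \<alpha> v j' powr (1/\<alpha>))) / v"

end

theory Submission imports Defs begin
lemma shape:
  assumes S: "inverse_S_shaped W" and "0 \<le> p" "p < q" "q - p = r - q" "r - q = s - r" "s \<le> (1::real)"
    and lt: "W q - W p < W r - W q"
  shows "W r - W q < W s - W r"
proof -
  obtain W' x0 where D: "\<forall>x\<in>{0..1}. (W has_real_derivative W' x) (at x within {0..1})"
    and x0: "x0 \<in> {0..1}" and dec: "\<forall>a\<in>{0..x0}. \<forall>b\<in>{0..x0}. a < b \<longrightarrow> W' b < W' a"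
    and inc: "strict_mono_on {x0..1} W'"
    using S unfolding inverse_S_shaped_def by blast
  have cont: "continuous_on {0..1} W" using D DERIV_continuous_on by blast
  have mvt: "\<exists>z. a < z \<and> z < b \<and> W b - W a = (b - a) * W' z" if "0 \<le> a" "a < b" "b \<le> 1" for a b
  proof -
    have c: "continuous_on {a..b} W" using cont continuous_on_subset that by fastforce
    have dz: "DERIV W z :> W' z" if "a < z" "z < b" for z
    proof -
      have "z \<in> interior {0..1::real}" using that \<open>0 \<le> a\<close> \<open>b \<le> 1\<close> by auto
      moreover have "z \<in> {0..1}" using that \<open>0 \<le> a\<close> \<open>b \<le> 1\<close> by auto
      then have "(W has_real_derivative W' z) (at z within {0..1})" using D by auto
      then show ?thesis using at_within_interior[OF \<open>z \<in> interior {0..1::real}\<close>] by simp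
    qed
    obtain l z where "a < z" "z < b" "DERIV W z :> l" "W b - W a = (b - a) * l"
      using MVT[OF \<open>a < b\<close> c] dz real_differentiable_def by blast
    then show ?thesis using dz DERIV_unique by metis
  qed
  have "\<exists>z. p < z \<and> z < q \<and> W q - W p = (q - p) * W' z" by (rule mvt) (use assms in linarith)+
  then obtain z1 where z1: "p < z1" "z1 < q" "W q - W p = (q - p) * W' z1" using mvt[of p q] assms by blast
  have "\<exists>z. q < z \<and> z < r \<and> W r - W q = (r - q) * W' z" by (rule mvt) (use assms in linarith)+
  then obtain z2 where z2: "q < z2" "z2 < r" "W r - W q = (r - q) * W' z2" by blast
  have "\<exists>z. r < z \<and> z < s \<and> W s - W r = (s - r) * W' z" by (rule mvt) (use assms in linarith)+
  then obtain z3 where z3: "r < z3" "z3 < s" "W s - W r = (s - r) * W' z3" by blast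
  have pos: "r - q > 0" using assms by linarith
  have "W' z1 < W' z2" using lt z1 z2 pos assms by (metis mult_less_cancel_left_pos)
  show ?thesis
  proof (cases "z2 \<le> x0")
    case True
    then have "W' z2 < W' z1" using dec z1 z2 assms by force
    then show ?thesis using \<open>W' z1 < W' z2\<close> by simp
  next
    case False
    then have "W' z2 < W' z3" using inc z2 z3 assms x0 unfolding strict_mono_on_def by force
    then show ?thesis using z2 z3 pos assms by simp
  qed
qed

lemma sum_split_at:
  fixes f :: "nat \<Rightarrow> real"
  assumes "m \<le> k + 1" "k \<le> n"
  shows "sum f {m..n} = sum f {m..k} + sum f {k+1..n}"
proof -
  have "n = k + (n - k)" using assms by simp
  then have "sum f {m..n} = sum f {m..k + (n - k)}" by simp
  also have "\<dots> = sum f {m..k} + sum f {k+1..k + (n - k)}" by (rule sum.ub_add_nat) (use assms in simp)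
  also have "k + (n - k) = n" using assms by simp
  finally show ?thesis .
qed

lemma decr_chain:
  fixes h :: "nat \<Rightarrow> real"
  assumes ch: "\<And>k. 1 \<le> k \<Longrightarrow> k \<le> j \<Longrightarrow> h (k+1) < h k" and "k \<le> m" "1 \<le> k" "m \<le> j"
  shows "h (m+1) < h k"
  using assms(2,4)
proof (induction m rule: dec_induct)
  case base
  then show ?case using ch assms by simp
next
  case (step m)
  then have "h (Suc m + 1) < h (Suc m)" using ch[of "Suc m"] assms by simp
  then show ?case using step by simp
qed

lemma chain_down:
  fixes h :: "nat \<Rightarrow> real"
  assumes sh: "\<And>k. 2 \<le> k \<Longrightarrow> k+1 \<le> np \<Longrightarrow> h (k+1) < h k \<Longrightarrow> h k < h (k-1)"
    and "h (j+1) < h j" "j+1 \<le> np"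
  shows "\<forall>d. d < j \<longrightarrow> h (j-d+1) < h (j-d)"
proof (intro allI impI)
  fix d assume "d < j"
  then show "h (j-d+1) < h (j-d)"
  proof (induction d)
    case 0
    then show ?case using assms by simp
  next
    case (Suc d)
    then have "h (j-d+1) < h (j-d)" by simp
    moreover have "2 \<le> j - d" "j - d + 1 \<le> np" using Suc assms by auto
    ultimately have lt: "h (j-d) < h (j-d-1)" using sh by blast
    have e1: "j - Suc d + 1 = j - d" using Suc by auto
    have e2: "j - Suc d = j - d - 1" using Suc by auto
    have a1: "h (j - Suc d + 1) = h (j - d)" by (rule arg_cong[OF e1])
    have a2: "h (j - Suc d) = h (j - d - 1)" by (rule arg_cong[OF e2])
    show ?case using lt a1 a2 by linarith
  qed
qed

lemma avg:
  fixes h :: "nat \<Rightarrow> real"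
  assumes H: "\<And>k. 1 \<le> k \<Longrightarrow> k < J \<Longrightarrow> real k * h (k+1) < (\<Sum>j=1..k. h j)"
    and "1 \<le> i" "i \<le> i'" "i' \<le> J"
  shows "real i * (\<Sum>j=1..i'. h j) \<le> real i' * (\<Sum>j=1..i. h j)"
  using assms(3,4)
proof (induction i' rule: dec_induct)
  case base
  then show ?case by simp
next
  case (step m)
  let ?T = "\<lambda>k. (\<Sum>j=1..k. h j)"
  have IH: "real i * ?T m \<le> real m * ?T i" using step by simp
  have hm: "real m * h (m+1) < ?T m" using H[of m] step assms by simp
  have TS: "?T (Suc m) = ?T m + h (m+1)" by simp
  have mpos: "real m > 0" using step assms by simp
  have "real m * ?T (Suc m) < (real m + 1) * ?T m" using TS hm by (simp add: algebra_simps)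
  then have "real i * (real m * ?T (Suc m)) \<le> real i * ((real m + 1) * ?T m)"
    using assms by (intro mult_left_mono) auto
  also have "\<dots> = (real m + 1) * (real i * ?T m)" by (simp add: algebra_simps)
  also have "\<dots> \<le> (real m + 1) * (real m * ?T i)" using IH by (intro mult_left_mono) auto
  finally have "real m * (real i * ?T (Suc m)) \<le> real m * ((real m + 1) * ?T i)" by (simp add: algebra_simps)
  then have "real i * ?T (Suc m) \<le> (real m + 1) * ?T i" using mpos by simp
  then show ?case by (simp add: add.commute)
qed

theorem lemma2:
  fixes N np :: nat and \<alpha> v :: real and W :: "real \<Rightarrow> real"
  assumes "0 < \<alpha>" "\<alpha> < 1" "1 \<le> np" "np \<le> N"
    and "inverse_S_shaped W" "W 0 = 0" "W 1 = 1"
    and "v > 0"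
  defines "y \<equiv> ystar W N np \<alpha> v" and "m \<equiv> mu W N np \<alpha> v" and "\<Lambda> \<equiv> Lam W N np \<alpha> v"
      and "h \<equiv> hplus W N np"
  shows "(\<forall>j\<in>{1..np-1}. (1/\<alpha>) * y j powr (1/\<alpha> - 1) + m (j+1) - m j + \<Lambda> * h j = 0)
       \<and> (1/\<alpha>) * y np powr (1/\<alpha> - 1) - m np + \<Lambda> * h np = 0
       \<and> (\<forall>j\<in>{1..np-1}. m (j+1) * (y j - y (j+1)) = 0)
       \<and> m 1 * y 1 = 0
       \<and> (\<Sum>j=1..np. h j * y j) = v
       \<and> (\<forall>j\<in>{1..np}. m j \<ge> 0)
       \<and> 0 \<le> y 1 \<and> (\<forall>j\<in>{1..np-1}. y j \<le> y (j+1))"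
proof -
  note a0 = assms(1) and a1 = assms(2) and np1 = assms(3) and npN = assms(4) and WS = assms(5)
  define J where "J = transJ W N np"
  define S where "S = Ssum W N np"
  define Y where "Y = Yval W N np \<alpha> v"
  define ea where "ea = \<alpha> / (1 - \<alpha>)"
  define eb where "eb = 1 / \<alpha> - 1"
  define K where "K = (\<Sum>j'=1..np. y j' powr (1/\<alpha>))"
  have Npos: "real N > 0" using np1 npN by simp
  have hpos: "h j > 0" if "1 \<le> j" "j \<le> np" for j
  proof -
    have sm: "strict_mono_on {0..1} W" using WS unfolding inverse_S_shaped_def by blast
    have x1: "(real np - real j) / real N \<in> {0..1}" using that npN Npos by (auto simp: field_simps)
    have x2: "(real np - real j + 1) / real N \<in> {0..1}" using that npN Npos by (auto simp: field_simps)
    have "(real np - real j) / real N < (real np - real j + 1) / real N" using Npos by (simp add: divide_strict_right_mono)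
    then show ?thesis unfolding h_def hplus_def using strict_mono_onD[OF sm x1 x2] by simp
  qed
  define P where "P = (\<lambda>j. 1 \<le> j \<and> j \<le> np \<and> (j < np \<longrightarrow> real j * h (j+1) \<ge> (\<Sum>j'=1..j. h j')))"
  have Jdef: "J = (LEAST j. P j)" unfolding J_def transJ_def P_def h_def by simp
  have "P np" unfolding P_def using np1 by simp
  then have PJ: "P J" unfolding Jdef by (rule LeastI)
  then have J1: "1 \<le> J" and Jnp: "J \<le> np" and Jc: "J < np \<Longrightarrow> real J * h (J+1) \<ge> (\<Sum>j'=1..J. h j')"
    unfolding P_def by auto
  have Jmin: "real k * h (k+1) < (\<Sum>j=1..k. h j)" if "1 \<le> k" "k < J" for k
  proof -
    have "\<not> P k" using not_less_Least[of k P] that unfolding Jdef by blast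
    then show ?thesis using that Jnp unfolding P_def by auto
  qed
  have Sdef: "S = (\<Sum>j'=1..J. h j')" unfolding S_def Ssum_def J_def h_def by simp
  have Spos: "S > 0" unfolding Sdef using J1 Jnp hpos by (intro sum_pos) auto
  define Q where "Q = (\<Sum>j'=J+1..np. h j' powr (1 / (1 - \<alpha>)))"
  have Qnn: "Q \<ge> 0" unfolding Q_def by (intro sum_nonneg) simp
  have Ydef: "Y = v * S powr ea / (S powr (1 / (1 - \<alpha>)) + real J powr ea * Q)"
    unfolding Y_def Yval_def ea_def Q_def S_def J_def h_def by simp
  have den: "S powr (1 / (1 - \<alpha>)) + real J powr ea * Q > 0"
    using Spos Qnn by (simp add: add_pos_nonneg)
  have Ypos: "Y > 0" unfolding Ydef using den Spos assms(8) by simp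
  define c where "c = (\<lambda>j. if j \<le> J then 1 else real J * h j / S)"
  have cpos: "c j > 0" if "1 \<le> j" "j \<le> np" for j
    unfolding c_def using hpos[OF that] Spos J1 by auto
  have yc: "y j = c j powr ea * Y" for j
    unfolding y_def ystar_def c_def ea_def Y_def J_def S_def h_def by simp
  have ypos: "y j > 0" if "1 \<le> j" "j \<le> np" for j
    using yc cpos[OF that] Ypos by simp
  have abe: "ea * eb = 1" unfolding ea_def eb_def using a0 a1 by (simp add: field_simps)
  define R where "R = Y powr eb"
  have Rpos: "R > 0" unfolding R_def using Ypos by simp
  have yb: "y j powr eb = c j * R" if "1 \<le> j" "j \<le> np" for j
  proof -
    have "y j powr eb = (c j powr ea) powr eb * R" unfolding yc R_def by (simp add: powr_mult)
    also have "\<dots> = c j * R" using abe cpos[OF that] by (simp add: powr_powr)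
    finally show ?thesis .
  qed
  have ya: "y j powr (1/\<alpha>) = y j * (c j * R)" if "1 \<le> j" "j \<le> np" for j
  proof -
    have "1/\<alpha> = 1 + eb" unfolding eb_def by simp
    then have "y j powr (1/\<alpha>) = y j powr 1 * y j powr eb" by (simp add: powr_add)
    then show ?thesis using yb[OF that] ypos[OF that] by simp
  qed
  have head_y: "y j = Y" if "j \<le> J" for j using yc that unfolding c_def by simp
  have sumhy: "(\<Sum>j=1..np. h j * y j) = v"
  proof -
    have "(\<Sum>j=1..np. h j * y j) = (\<Sum>j=1..J. h j * y j) + (\<Sum>j=J+1..np. h j * y j)"
      by (rule sum_split_at) (use J1 Jnp in auto)
    also have "(\<Sum>j=1..J. h j * y j) = S * Y" unfolding Sdef sum_distrib_right
      using head_y by (intro sum.cong) auto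
    also have "(\<Sum>j=J+1..np. h j * y j) = (\<Sum>j=J+1..np. (real J powr ea / S powr ea * Y) * h j powr (1 / (1 - \<alpha>)))"
    proof (intro sum.cong refl)
      fix j assume j: "j \<in> {J+1..np}"
      then have hj: "h j > 0" using hpos J1 by auto
      have e: "1 / (1 - \<alpha>) = 1 + ea" unfolding ea_def using a1 by (simp add: field_simps)
      have "h j * y j = h j * ((real J * h j / S) powr ea * Y)" using yc j unfolding c_def by simp
      also have "\<dots> = (real J powr ea / S powr ea * Y) * (h j powr 1 * h j powr ea)"
        using hj by (simp add: powr_mult powr_divide)
      also have "\<dots> = (real J powr ea / S powr ea * Y) * h j powr (1 / (1 - \<alpha>))"
        unfolding e by (simp add: powr_add)
      finally show "h j * y j = (real J powr ea / S powr ea * Y) * h j powr (1 / (1 - \<alpha>))" .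
    qed
    also have "\<dots> = real J powr ea / S powr ea * Y * Q" unfolding Q_def sum_distrib_left by simp
    finally have "(\<Sum>j=1..np. h j * y j) = S * Y + real J powr ea / S powr ea * Y * Q" .
    have Seq: "S * S powr ea = S powr (1 / (1 - \<alpha>))"
    proof -
      have e: "1 / (1 - \<alpha>) = 1 + ea" unfolding ea_def using a1 by (simp add: field_simps)
      show ?thesis unfolding e using Spos by (simp add: powr_add)
    qed
    have "S * Y + real J powr ea / S powr ea * Y * Q = Y * (S * S powr ea + real J powr ea * Q) / S powr ea"
      using Spos by (simp add: field_simps)
    also have "\<dots> = Y * (S powr (1 / (1 - \<alpha>)) + real J powr ea * Q) / S powr ea" using Seq by simp
    also have "\<dots> = v"
    proof -
      have d0: "S powr (1 / (1 - \<alpha>)) + real J powr ea * Q \<noteq> 0" using den by simp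
      have s0: "S powr ea \<noteq> 0" using Spos by simp
      show ?thesis unfolding Ydef using d0 s0 by simp
    qed
    finally show ?thesis using \<open>(\<Sum>j=1..np. h j * y j) = S * Y + real J powr ea / S powr ea * Y * Q\<close> by simp
  qed
  have Kval: "K = R * (real J / S) * v"
  proof -
    have k1: "K = R * (\<Sum>j=1..np. c j * y j)" unfolding K_def sum_distrib_left
      using ya by (intro sum.cong) auto
    have k2: "(\<Sum>j=1..np. c j * y j) = (\<Sum>j=1..J. c j * y j) + (\<Sum>j=J+1..np. c j * y j)"
      by (rule sum_split_at) (use J1 Jnp in auto)
    have hs: "(\<Sum>j=1..J. h j * y j) = S * Y" unfolding Sdef sum_distrib_right
      using head_y by (intro sum.cong) auto
    have k3: "(\<Sum>j=1..J. c j * y j) = real J * Y"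
    proof -
      have "(\<Sum>j=1..J. c j * y j) = (\<Sum>j=1..J. Y)" using head_y unfolding c_def by (intro sum.cong) auto
      then show ?thesis by simp
    qed
    have k4: "(\<Sum>j=J+1..np. c j * y j) = (real J / S) * (\<Sum>j=J+1..np. h j * y j)"
      unfolding sum_distrib_left c_def by (intro sum.cong) auto
    have k5: "(\<Sum>j=1..np. h j * y j) = (\<Sum>j=1..J. h j * y j) + (\<Sum>j=J+1..np. h j * y j)"
      by (rule sum_split_at) (use J1 Jnp in auto)
    have "(\<Sum>j=J+1..np. h j * y j) = v - S * Y" using k5 hs sumhy by simp
    then have "(\<Sum>j=1..np. c j * y j) = real J * Y + (real J / S) * (v - S * Y)" using k2 k3 k4 by simp
    also have "\<dots> = (real J / S) * v" using Spos by (simp add: field_simps)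
    finally show ?thesis using k1 by simp
  qed
  define e where "e = (\<lambda>j. c j - real J / S * h j)"
  have mval: "m j = (1/\<alpha>) * R * (\<Sum>j'=j..np. e j')" if "1 \<le> j" for j
  proof -
    have m0: "m j = - ((1/\<alpha>) / v) * K * (\<Sum>j'=j..np. h j') + (1/\<alpha>) * (\<Sum>j'=j..np. y j' powr (1/\<alpha> - 1))"
      unfolding m_def mu_def K_def y_def h_def by (rule refl)
    have s1: "(\<Sum>j'=j..np. y j' powr (1/\<alpha> - 1)) = R * (\<Sum>j'=j..np. c j')"
    proof -
      have "(\<Sum>j'=j..np. y j' powr (1/\<alpha> - 1)) = (\<Sum>j'=j..np. R * c j')"
        using yb that unfolding eb_def by (intro sum.cong) auto
      then show ?thesis by (simp add: sum_distrib_left)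
    qed
    have "(\<Sum>j'=j..np. e j') = (\<Sum>j'=j..np. c j') - real J / S * (\<Sum>j'=j..np. h j')"
      unfolding e_def by (simp add: sum_subtractf sum_distrib_left)
    then have ce: "(\<Sum>j'=j..np. c j') = (\<Sum>j'=j..np. e j') + real J / S * (\<Sum>j'=j..np. h j')" by simp
    have "m j = - ((1/\<alpha>) / v) * (R * (real J / S) * v) * (\<Sum>j'=j..np. h j') + (1/\<alpha>) * (R * ((\<Sum>j'=j..np. e j') + real J / S * (\<Sum>j'=j..np. h j')))"
      unfolding m0 s1 ce Kval by (rule refl)
    also have "\<dots> = (1/\<alpha>) * R * (\<Sum>j'=j..np. e j')" using assms(8) Spos a0 by (simp add: field_simps)
    finally show ?thesis .
  qed
  have etail: "e j = 0" if "J < j" for j unfolding e_def c_def using that by simp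
  have mtail: "m j = 0" if "J < j" for j
    using mval[of j] that J1 etail by simp
  have mhead: "m j = (1/\<alpha>) * R * (real (J - j + 1) - real J / S * (S - (\<Sum>j'=1..j-1. h j')))"
    if "1 \<le> j" "j \<le> J" for j
  proof -
    have "(\<Sum>j'=j..np. e j') = (\<Sum>j'=j..J. e j') + (\<Sum>j'=J+1..np. e j')"
      by (rule sum_split_at) (use that Jnp in auto)
    also have "(\<Sum>j'=J+1..np. e j') = 0" using etail by simp
    also have "(\<Sum>j'=j..J. e j') = (\<Sum>j'=j..J. 1 - real J / S * h j')"
      unfolding e_def c_def by (intro sum.cong) auto
    also have "\<dots> = real (J - j + 1) - real J / S * (\<Sum>j'=j..J. h j')"
      using that by (simp add: sum_subtractf sum_distrib_left Suc_diff_le)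
    also have "(\<Sum>j'=j..J. h j') = S - (\<Sum>j'=1..j-1. h j')"
      unfolding Sdef using sum_split_at[of 1 "j-1" J h] that by simp
    finally show ?thesis using mval that by simp
  qed
  have m1: "m 1 = 0" using mhead[of 1] J1 Spos by simp
  have mnn: "m j \<ge> 0" if "1 \<le> j" "j \<le> np" for j
  proof (cases "j \<le> J")
    case False then show ?thesis using mtail by simp
  next
    case True
    have "real (j-1) * S \<le> real J * (\<Sum>j'=1..j-1. h j')"
    proof (cases "j = 1")
      case True then show ?thesis by simp
    next
      case False
      then show ?thesis unfolding Sdef using avg[of J h "j-1" J] Jmin True that by simp
    qed
    then have "real J / S * (S - (\<Sum>j'=1..j-1. h j')) \<le> real (J - j + 1)"
      using Spos True that by (simp add: field_simps of_nat_diff)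
    then show ?thesis using mhead[OF that(1) True] Rpos a0 by simp
  qed
  have hsh: "h k < h (k-1)" if "2 \<le> k" "k+1 \<le> np" "h (k+1) < h k" for k
  proof -
    define p where "p = (real np - real k - 1) / real N"
    define q where "q = (real np - real k) / real N"
    define r where "r = (real np - real k + 1) / real N"
    define s where "s = (real np - real k + 2) / real N"
    have e1: "h (k+1) = W q - W p" unfolding h_def hplus_def p_def q_def by (simp add: algebra_simps)
    have e2: "h k = W r - W q" unfolding h_def hplus_def r_def q_def by (simp add: algebra_simps)
    have e3: "h (k-1) = W s - W r" unfolding h_def hplus_def r_def s_def using that by (simp add: algebra_simps of_nat_diff)
    have "0 \<le> p" unfolding p_def using that by simp
    moreover have "p < q" unfolding p_def q_def using Npos by (simp add: divide_strict_right_mono)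
    moreover have "q - p = r - q" "r - q = s - r" unfolding p_def q_def r_def s_def using Npos by (simp_all add: field_simps)
    moreover have "s \<le> 1" unfolding s_def using that npN Npos by (simp add: field_simps)
    ultimately show ?thesis using shape[OF WS, of p q r s] e1 e2 e3 that by simp
  qed
  have hmono: "h j \<le> h (j+1)" if "J < j" "j+1 \<le> np" for j
  proof (rule ccontr)
    assume "\<not> h j \<le> h (j+1)"
    then have lt: "h (j+1) < h j" by simp
    have cd: "\<forall>d. d < j \<longrightarrow> h (j-d+1) < h (j-d)" by (rule chain_down[OF _ lt that(2)]) (use hsh in auto)
    have ch: "h (k+1) < h k" if "1 \<le> k" "k \<le> j" for k
      using cd[rule_format, of "j-k"] that by simp
    have "\<forall>k\<in>{1..J}. h (J+1) < h k"
      using decr_chain[of j h] ch that by auto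
    then have "(\<Sum>k=1..J. h (J+1)) < (\<Sum>k=1..J. h k)" using J1 by (intro sum_strict_mono) auto
    then have "real J * h (J+1) < (\<Sum>k=1..J. h k)" by simp
    then show False using Jc that by simp
  qed
  have ymono: "y j \<le> y (j+1)" if "1 \<le> j" "j+1 \<le> np" for j
  proof -
    have "c j \<le> c (j+1)"
    proof (cases "j < J")
      case True then show ?thesis unfolding c_def by simp
    next
      case False
      show ?thesis
      proof (cases "j = J")
        case True
        then have "S \<le> real J * h (J+1)" using Jc that Sdef by simp
        then show ?thesis unfolding c_def using True Spos by (simp add: field_simps)
      next
        case False
        then have "J < j" using \<open>\<not> j < J\<close> by simp
        then show ?thesis unfolding c_def using hmono[OF _ that(2)] Spos J1
          by (simp add: divide_right_mono)
      qed
    qed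
    moreover have "ea \<ge> 0" unfolding ea_def using a0 a1 by simp
    ultimately have "c j powr ea \<le> c (j+1) powr ea" using cpos[of j] that by (intro powr_mono2) auto
    then show ?thesis unfolding yc using Ypos by simp
  qed
  have mstep: "m j - m (j+1) = -((1/\<alpha>)/v) * K * h j + (1/\<alpha>) * y j powr (1/\<alpha> - 1)" if "j \<le> np" for j
  proof -
    have s1: "(\<Sum>j'=j..np. h j') = h j + (\<Sum>j'=j+1..np. h j')" using that by (simp add: sum.atLeast_Suc_atMost)
    have s2: "(\<Sum>j'=j..np. y j' powr (1/\<alpha> - 1)) = y j powr (1/\<alpha> - 1) + (\<Sum>j'=j+1..np. y j' powr (1/\<alpha> - 1))"
      using that by (simp add: sum.atLeast_Suc_atMost)
    have mj: "m i = - ((1/\<alpha>) / v) * K * (\<Sum>j'=i..np. h j') + (1/\<alpha>) * (\<Sum>j'=i..np. y j' powr (1/\<alpha> - 1))" for i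
      unfolding m_def mu_def K_def y_def h_def by (rule refl)
    show ?thesis unfolding mj[of j] mj[of "j+1"] s1 s2 by (simp add: algebra_simps)
  qed
  have Lam2: "\<Lambda> = -((1/\<alpha>)/v) * K"
  proof -
    have "\<Lambda> = -((1/\<alpha>) * K) / v" unfolding \<Lambda>_def Lam_def K_def y_def by (rule refl)
    then show ?thesis by simp
  qed
  have mlast: "m (np+1) = 0"
  proof -
    have "m (np+1) = - ((1/\<alpha>) / v) * K * (\<Sum>j'=np+1..np. h j') + (1/\<alpha>) * (\<Sum>j'=np+1..np. y j' powr (1/\<alpha> - 1))"
      unfolding m_def mu_def K_def y_def h_def by (rule refl)
    then show ?thesis by simp
  qed
  show ?thesis
  proof (intro conjI ballI)
    fix j assume "j \<in> {1..np-1}"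
    then have "j \<le> np" by auto
    then show "(1/\<alpha>) * y j powr (1/\<alpha> - 1) + m (j+1) - m j + \<Lambda> * h j = 0"
      using mstep[of j] Lam2 by (simp add: algebra_simps)
  next
    show "(1/\<alpha>) * y np powr (1/\<alpha> - 1) - m np + \<Lambda> * h np = 0"
      using mstep[of np] Lam2 mlast by (simp add: algebra_simps)
  next
    fix j assume j: "j \<in> {1..np-1}"
    show "m (j+1) * (y j - y (j+1)) = 0"
    proof (cases "j + 1 \<le> J")
      case True then show ?thesis using head_y by simp
    next
      case False then show ?thesis using mtail by simp
    qed
  next
    show "m 1 * y 1 = 0" using m1 by simp
  next
    show "(\<Sum>j=1..np. h j * y j) = v" by (rule sumhy)
  next
    fix j assume "j \<in> {1..np}" then show "m j \<ge> 0" using mnn by simp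
  next
    show "0 \<le> y 1" using ypos[of 1] np1 by simp
  next
    fix j assume "j \<in> {1..np-1}"
    then have "1 \<le> j" "j + 1 \<le> np" by auto
    then show "y j \<le> y (j+1)" using ymono by simp
  qed
qed
end
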